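(* Let $G_1$ and $G_2$ be TRVGs with $V(G_1)\cap V(G_2)=\{v\}$. Suppose that for each $i\in\{1,2\}$ there is a rectangle representation of $G_i$ in which the rectangle for $v$ sees no other rectangle in one of the two directions (i.e., either no horizontal line or no vertical line meets the interiors of both the rectangle for $v$ and another rectangle of the representation). Then $G_1\cup G_2=(V(G_1)\cup V(G_2),E(G_1)\cup E(G_2))$ is a TRVG.
   Context: A graph $G$ is a transparent rectangle visibility graph (TRVG) if its vertices can be represented by a collection of pairwise non-overlapping rectangles in the plane whose sides are parallel to the coordinate axes, one per vertex, such that two distinct vertices are adjacent if and only if there is a horizontal or a vertical line intersecting the interiors of both of their rectangles (other rectangles do not block visibility). Two rectangles see each other horizontally (resp. vertically) if some horizontal (resp. vertical) line meets the interiors of both. *)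

theory Defs
  imports Complex_Main
begin

text \<open>An axis-parallel rectangle [x1,x2] x [y1,y2] is stored as ((x1,x2),(y1,y2)).\<close>
type_synonym rect = "(real \<times> real) \<times> (real \<times> real)"

definition valid_rect :: "rect \<Rightarrow> bool" where
  "valid_rect R \<longleftrightarrow> fst (fst R) < snd (fst R) \<and> fst (snd R) < snd (snd R)"

definition xint :: "rect \<Rightarrow> real set" where
  "xint R = {fst (fst R) <..< snd (fst R)}"

definition yint :: "rect \<Rightarrow> real set" where
  "yint R = {fst (snd R) <..< snd (snd R)}"

definition rect_interior :: "rect \<Rightarrow> (real \<times> real) set" where
  "rect_interior R = xint R \<times> yint R"

definition sees_h :: "rect \<Rightarrow> rect \<Rightarrow> bool" where
  "sees_h R S \<longleftrightarrow> (\<exists>c. c \<in> yint R \<and> c \<in> yint S)"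

definition sees_v :: "rect \<Rightarrow> rect \<Rightarrow> bool" where
  "sees_v R S \<longleftrightarrow> (\<exists>c. c \<in> xint R \<and> c \<in> xint S)"

definition simple_graph :: "'a set \<Rightarrow> 'a set set \<Rightarrow> bool" where
  "simple_graph V E \<longleftrightarrow> finite V \<and>
     (\<forall>e\<in>E. \<exists>u w. u \<noteq> w \<and> u \<in> V \<and> w \<in> V \<and> e = {u, w})"

definition trvg_rep :: "'a set \<Rightarrow> 'a set set \<Rightarrow> ('a \<Rightarrow> rect) \<Rightarrow> bool" where
  "trvg_rep V E r \<longleftrightarrow>
     (\<forall>u\<in>V. valid_rect (r u)) \<and>
     (\<forall>u\<in>V. \<forall>w\<in>V. u \<noteq> w \<longrightarrow> rect_interior (r u) \<inter> rect_interior (r w) = {}) \<and>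
     (\<forall>u\<in>V. \<forall>w\<in>V. u \<noteq> w \<longrightarrow>
        ({u, w} \<in> E \<longleftrightarrow> sees_h (r u) (r w) \<or> sees_v (r u) (r w)))"

definition TRVG :: "'a set \<Rightarrow> 'a set set \<Rightarrow> bool" where
  "TRVG V E \<longleftrightarrow> simple_graph V E \<and> (\<exists>r. trvg_rep V E r)"

end

theory Submission
  imports Defs
begin

definition sq :: "real \<Rightarrow> real \<Rightarrow> real \<Rightarrow> real" where
  "sq a b t = a + (b - a) * ((arctan t + pi/2) / pi)"

lemma sq_mono: assumes "a < b" "s < t" shows "sq a b s < sq a b t"
proof -
  have "arctan s + pi/2 < arctan t + pi/2" using assms(2) by (simp add: arctan_less_iff)
  then have "(arctan s + pi/2) / pi < (arctan t + pi/2) / pi"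
    by (intro divide_strict_right_mono) auto
  then have "(b - a) * ((arctan s + pi/2) / pi) < (b - a) * ((arctan t + pi/2) / pi)"
    using assms(1) by (intro mult_strict_left_mono) auto
  then show ?thesis unfolding sq_def by (rule add_strict_left_mono)
qed

lemma sq_less: "a < b \<Longrightarrow> sq a b s < sq a b t \<longleftrightarrow> s < t"
  by (metis sq_mono not_less_iff_gr_or_eq order.asym)

lemma sq_range: assumes "a < b" shows "a < sq a b t" "sq a b t < b"
proof -
  have h: "0 < (arctan t + pi/2) / pi" "(arctan t + pi/2) / pi < 1"
    using arctan_bounded[of t] pi_gt_zero by (auto simp: field_simps)
  have "0 < (b - a) * ((arctan t + pi/2) / pi)" using h assms by (intro mult_pos_pos) auto
  then show "a < sq a b t" unfolding sq_def by simp
  have "(b - a) * ((arctan t + pi/2) / pi) < (b - a) * 1"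
    using h assms by (intro mult_strict_left_mono) auto
  then show "sq a b t < b" unfolding sq_def by simp
qed

lemma ivl: "({p<..<q} \<inter> {p'<..<q'} \<noteq> {}) \<longleftrightarrow> (p < q \<and> p < q' \<and> p' < q \<and> p' < (q'::real))"
proof
  assume "{p<..<q} \<inter> {p'<..<q'} \<noteq> {}"
  then show "p < q \<and> p < q' \<and> p' < q \<and> p' < q'" by auto
next
  assume h: "p < q \<and> p < q' \<and> p' < q \<and> p' < q'"
  let ?c = "(max p p' + min q q') / 2"
  have "?c \<in> {p<..<q} \<inter> {p'<..<q'}" using h by (auto simp: max_def min_def)
  then show "{p<..<q} \<inter> {p'<..<q'} \<noteq> {}" by blast
qed

lemma sq_ov: "a < b \<Longrightarrow> ({sq a b p<..<sq a b q} \<inter> {sq a b p'<..<sq a b q'} \<noteq> {}) \<longleftrightarrow>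
   ({p<..<q} \<inter> {p'<..<q'} \<noteq> {})"
  unfolding ivl by (simp add: sq_less)

lemma sees_h_alt: "sees_h R S \<longleftrightarrow> yint R \<inter> yint S \<noteq> {}"
  unfolding sees_h_def by auto
lemma sees_v_alt: "sees_v R S \<longleftrightarrow> xint R \<inter> xint S \<noteq> {}"
  unfolding sees_v_def by auto

lemma valid_iff: "valid_rect R \<longleftrightarrow> sees_h R R \<and> sees_v R R"
  unfolding valid_rect_def sees_h_alt sees_v_alt xint_def yint_def by auto

lemma disj_iff: "rect_interior R \<inter> rect_interior S = {} \<longleftrightarrow> \<not> (sees_h R S \<and> sees_v R S)"
  unfolding rect_interior_def sees_h_alt sees_v_alt by auto

lemma trvg_rep_iff: "trvg_rep V E r \<longleftrightarrow>
     (\<forall>u\<in>V. sees_h (r u) (r u) \<and> sees_v (r u) (r u)) \<and>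
     (\<forall>u\<in>V. \<forall>w\<in>V. u \<noteq> w \<longrightarrow> \<not> (sees_h (r u) (r w) \<and> sees_v (r u) (r w))) \<and>
     (\<forall>u\<in>V. \<forall>w\<in>V. u \<noteq> w \<longrightarrow>
        ({u, w} \<in> E \<longleftrightarrow> sees_h (r u) (r w) \<or> sees_v (r u) (r w)))"
  unfolding trvg_rep_def valid_iff disj_iff by simp

definition tr :: "rect \<Rightarrow> rect" where "tr R = (snd R, fst R)"

lemma tr_sees: "sees_h (tr R) (tr S) = sees_v R S" "sees_v (tr R) (tr S) = sees_h R S"
  unfolding tr_def sees_h_def sees_v_def xint_def yint_def by auto

lemma tr_rep: "trvg_rep V E r \<Longrightarrow> trvg_rep V E (\<lambda>u. tr (r u))"
  unfolding trvg_rep_iff tr_sees by blast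

definition mapx :: "(real \<Rightarrow> real) \<Rightarrow> rect \<Rightarrow> rect" where
  "mapx f R = ((f (fst (fst R)), f (snd (fst R))), snd R)"
definition mapy :: "(real \<Rightarrow> real) \<Rightarrow> rect \<Rightarrow> rect" where
  "mapy f R = (fst R, (f (fst (snd R)), f (snd (snd R))))"

lemma sees_h_sym: "sees_h R S = sees_h S R" unfolding sees_h_def by auto
lemma sees_v_sym: "sees_v R S = sees_v S R" unfolding sees_v_def by auto

lemma core:
  assumes sg1: "simple_graph V1 E1" and sg2: "simple_graph V2 E2"
    and int: "V1 \<inter> V2 = {v}"
    and rep1: "trvg_rep V1 E1 r1" and n1: "\<forall>w\<in>V1 - {v}. \<not> sees_h (r1 v) (r1 w)"
    and rep2: "trvg_rep V2 E2 r2" and n2: "\<forall>w\<in>V2 - {v}. \<not> sees_v (r2 v) (r2 w)"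
  shows "TRVG (V1 \<union> V2) (E1 \<union> E2)"
proof -
  have vV1: "v \<in> V1" and vV2: "v \<in> V2" using int by auto
  define a where "a = fst (fst (r2 v))"
  define b where "b = snd (fst (r2 v))"
  define c where "c = fst (snd (r1 v))"
  define d where "d = snd (snd (r1 v))"
  have ab: "a < b" using rep2 vV2 unfolding trvg_rep_def valid_rect_def a_def b_def by auto
  have cd: "c < d" using rep1 vV1 unfolding trvg_rep_def valid_rect_def c_def d_def by auto
  define r where "r = (\<lambda>u. if u = v then
      ((sq a b (fst (fst (r1 v))), sq a b (snd (fst (r1 v)))),
       (sq c d (fst (snd (r2 v))), sq c d (snd (snd (r2 v)))))
    else if u \<in> V1 then mapx (sq a b) (r1 u) else mapy (sq c d) (r2 u))"
  have F1: "xint (r u) = xint (mapx (sq a b) (r1 u))" if "u \<in> V1" for u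
    using that unfolding r_def mapx_def xint_def by auto
  have F2: "yint (r u) = yint (r1 u)" if "u \<in> V1" "u \<noteq> v" for u
    using that unfolding r_def mapx_def yint_def by auto
  have F3: "yint (r u) = yint (mapy (sq c d) (r2 u))" if "u \<in> V2" for u
    using that int unfolding r_def mapy_def yint_def by auto
  have F4: "xint (r u) = xint (r2 u)" if "u \<in> V2" "u \<noteq> v" for u
    using that int unfolding r_def mapy_def xint_def by auto
  have G1: "xint (mapx (sq a b) R) \<subseteq> xint (r2 v)" for R
  proof
    fix x assume "x \<in> xint (mapx (sq a b) R)"
    then have "sq a b (fst (fst R)) < x" "x < sq a b (snd (fst R))" by (auto simp: mapx_def xint_def)
    then have "a < x" "x < b" using sq_range[OF ab] by (meson less_trans)+
    then show "x \<in> xint (r2 v)" by (simp add: xint_def a_def b_def)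
  qed
  have G2: "yint (mapy (sq c d) R) \<subseteq> yint (r1 v)" for R
  proof
    fix x assume "x \<in> yint (mapy (sq c d) R)"
    then have "sq c d (fst (snd R)) < x" "x < sq c d (snd (snd R))" by (auto simp: mapy_def yint_def)
    then have "c < x" "x < d" using sq_range[OF cd] by (meson less_trans)+
    then show "x \<in> yint (r1 v)" by (simp add: yint_def c_def d_def)
  qed
  have M1: "xint (mapx (sq a b) R) \<inter> xint (mapx (sq a b) S) \<noteq> {} \<longleftrightarrow> xint R \<inter> xint S \<noteq> {}" for R S
    unfolding mapx_def xint_def using sq_ov[OF ab] by simp
  have M2: "yint (mapy (sq c d) R) \<inter> yint (mapy (sq c d) S) \<noteq> {} \<longleftrightarrow> yint R \<inter> yint S \<noteq> {}" for R S
    unfolding mapy_def yint_def using sq_ov[OF cd] by simp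
  have H1v: "sees_v (r u) (r w) \<longleftrightarrow> sees_v (r1 u) (r1 w)" if "u \<in> V1" "w \<in> V1" for u w
    unfolding sees_v_alt F1[OF that(1)] F1[OF that(2)] M1 ..
  have H2h: "sees_h (r u) (r w) \<longleftrightarrow> sees_h (r2 u) (r2 w)" if "u \<in> V2" "w \<in> V2" for u w
    unfolding sees_h_alt F3[OF that(1)] F3[OF that(2)] M2 ..
  have vself1: "sees_h (r1 v) (r1 v)" using rep1 vV1 unfolding trvg_rep_iff by auto
  have vself2: "sees_v (r2 v) (r2 v)" using rep2 vV2 unfolding trvg_rep_iff by auto
  have inter: "x = v" if "x \<in> V1" "x \<in> V2" for x using int that by blast
  have R1a: "sees_h (r1 u) (r1 u) \<and> sees_v (r1 u) (r1 u)" if "u \<in> V1" for u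
    using rep1 that unfolding trvg_rep_iff by blast
  have R1b: "\<not> (sees_h (r1 u) (r1 w) \<and> sees_v (r1 u) (r1 w)) \<and>
     ({u, w} \<in> E1 \<longleftrightarrow> sees_h (r1 u) (r1 w) \<or> sees_v (r1 u) (r1 w))"
    if "u \<in> V1" "w \<in> V1" "u \<noteq> w" for u w
    using rep1 that unfolding trvg_rep_iff by blast
  have R2a: "sees_h (r2 u) (r2 u) \<and> sees_v (r2 u) (r2 u)" if "u \<in> V2" for u
    using rep2 that unfolding trvg_rep_iff by blast
  have R2b: "\<not> (sees_h (r2 u) (r2 w) \<and> sees_v (r2 u) (r2 w)) \<and>
     ({u, w} \<in> E2 \<longleftrightarrow> sees_h (r2 u) (r2 w) \<or> sees_v (r2 u) (r2 w))"
    if "u \<in> V2" "w \<in> V2" "u \<noteq> w" for u w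
    using rep2 that unfolding trvg_rep_iff by blast
  have H1h0: "sees_h (r v) (r u) \<longleftrightarrow> sees_h (r1 v) (r1 u)" if "u \<in> V1" for u
  proof (cases "u = v")
    case True
    have "sees_h (r v) (r v)"
      using H2h[OF vV2 vV2] R2a[OF vV2] by simp
    then show ?thesis using True vself1 by simp
  next
    case False
    have e: "yint (r1 v) \<inter> yint (r1 u) = {}" using n1 that False unfolding sees_h_alt by blast
    have "yint (r v) \<inter> yint (r u) = {}"
      using G2[of "r2 v"] F3[OF vV2] F2[OF that False] e by blast
    then show ?thesis using e unfolding sees_h_alt by simp
  qed
  have H1h: "sees_h (r u) (r w) \<longleftrightarrow> sees_h (r1 u) (r1 w)" if "u \<in> V1" "w \<in> V1" for u w
  proof -
    consider "u = v" | "w = v" | "u \<noteq> v" "w \<noteq> v" by blast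
    then show ?thesis
    proof cases
      case 1 then show ?thesis using H1h0 that by simp
    next
      case 2 then show ?thesis using H1h0[OF that(1)] 
        by (simp add: sees_h_sym[of "r u" "r v"] sees_h_sym[of "r1 u" "r1 v"])
    next
      case 3 then show ?thesis unfolding sees_h_alt using F2 that by simp
    qed
  qed
  have H2v0: "sees_v (r v) (r u) \<longleftrightarrow> sees_v (r2 v) (r2 u)" if "u \<in> V2" for u
  proof (cases "u = v")
    case True
    have "sees_v (r v) (r v)"
      using H1v[OF vV1 vV1] R1a[OF vV1] by simp
    then show ?thesis using True vself2 by simp
  next
    case False
    have e: "xint (r2 v) \<inter> xint (r2 u) = {}" using n2 that False unfolding sees_v_alt by blast
    have "xint (r v) \<inter> xint (r u) = {}"
      using G1[of "r1 v"] F1[OF vV1] F4[OF that False] e by blast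
    then show ?thesis using e unfolding sees_v_alt by simp
  qed
  have H2v: "sees_v (r u) (r w) \<longleftrightarrow> sees_v (r2 u) (r2 w)" if "u \<in> V2" "w \<in> V2" for u w
  proof -
    consider "u = v" | "w = v" | "u \<noteq> v" "w \<noteq> v" by blast
    then show ?thesis
    proof cases
      case 1 then show ?thesis using H2v0 that by simp
    next
      case 2 then show ?thesis using H2v0[OF that(1)] 
        by (simp add: sees_v_sym[of "r u" "r v"] sees_v_sym[of "r2 u" "r2 v"])
    next
      case 3 then show ?thesis unfolding sees_v_alt using F4 that by simp
    qed
  qed
  have C: "\<not> sees_h (r u) (r w) \<and> \<not> sees_v (r u) (r w)"
    if "u \<in> V1" "u \<noteq> v" "w \<in> V2" "w \<noteq> v" for u w
  proof
    have e: "yint (r1 v) \<inter> yint (r1 u) = {}" using n1 that unfolding sees_h_alt by blast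
    have "yint (r u) \<inter> yint (r w) = {}"
      using G2[of "r2 w"] F3[OF that(3)] F2[OF that(1,2)] e by blast
    then show "\<not> sees_h (r u) (r w)" unfolding sees_h_alt by simp
    have e2: "xint (r2 v) \<inter> xint (r2 w) = {}" using n2 that unfolding sees_v_alt by blast
    have "xint (r u) \<inter> xint (r w) = {}"
      using G1[of "r1 u"] F1[OF that(1)] F4[OF that(3,4)] e2 by blast
    then show "\<not> sees_v (r u) (r w)" unfolding sees_v_alt by simp
  qed
  have C': "\<not> sees_h (r w) (r u) \<and> \<not> sees_v (r w) (r u)"
    if "u \<in> V1" "u \<noteq> v" "w \<in> V2" "w \<noteq> v" for u w
    using C[OF that] by (simp add: sees_h_sym[of "r w" "r u"] sees_v_sym[of "r w" "r u"])
  have E1sub: "{u, w} \<in> E1 \<Longrightarrow> u \<noteq> w \<Longrightarrow> u \<in> V1 \<and> w \<in> V1" for u w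
    using sg1 unfolding simple_graph_def by (auto simp: doubleton_eq_iff)
  have E2sub: "{u, w} \<in> E2 \<Longrightarrow> u \<noteq> w \<Longrightarrow> u \<in> V2 \<and> w \<in> V2" for u w
    using sg2 unfolding simple_graph_def by (auto simp: doubleton_eq_iff)
  have "trvg_rep (V1 \<union> V2) (E1 \<union> E2) r"
    unfolding trvg_rep_iff
  proof (rule conjI[OF _ conjI]; intro ballI impI)
    fix u assume "u \<in> V1 \<union> V2"
    then show "sees_h (r u) (r u) \<and> sees_v (r u) (r u)"
    proof
      assume "u \<in> V1" then show ?thesis using R1a[of u] H1h[of u u] H1v[of u u] by simp
    next
      assume "u \<in> V2" then show ?thesis using R2a[of u] H2h[of u u] H2v[of u u] by simp
    qed
  next
    fix u w assume u: "u \<in> V1 \<union> V2" and w: "w \<in> V1 \<union> V2" and uw: "u \<noteq> w"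
    have ex: "(u \<in> V1 \<and> w \<in> V1) \<or> (u \<in> V2 \<and> w \<in> V2) \<or>
        (u \<in> V1 \<and> u \<noteq> v \<and> w \<in> V2 \<and> w \<noteq> v) \<or> (w \<in> V1 \<and> w \<noteq> v \<and> u \<in> V2 \<and> u \<noteq> v)"
      using u w int by blast
    have nE1: "{u, w} \<notin> E1" if "u \<notin> V1 \<or> w \<notin> V1" using E1sub[of u w] that uw by blast
    have nE2: "{u, w} \<notin> E2" if "u \<notin> V2 \<or> w \<notin> V2" using E2sub[of u w] that uw by blast
    have ed1: "{u, w} \<in> E1 \<union> E2 \<longleftrightarrow> {u, w} \<in> E1" if "u \<in> V1" "w \<in> V1"
    proof -
      have "u \<notin> V2 \<or> w \<notin> V2" using inter[of u] inter[of w] that uw by blast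
      then show ?thesis using nE2 by blast
    qed
    have ed2: "{u, w} \<in> E1 \<union> E2 \<longleftrightarrow> {u, w} \<in> E2" if "u \<in> V2" "w \<in> V2"
    proof -
      have "u \<notin> V1 \<or> w \<notin> V1" using inter[of u] inter[of w] that uw by blast
      then show ?thesis using nE1 by blast
    qed
    have ed3: "{u, w} \<notin> E1 \<union> E2" if "(u \<in> V1 \<and> u \<noteq> v \<and> w \<in> V2 \<and> w \<noteq> v) \<or> (w \<in> V1 \<and> w \<noteq> v \<and> u \<in> V2 \<and> u \<noteq> v)"
    proof -
      have "u \<notin> V1 \<or> w \<notin> V1" "u \<notin> V2 \<or> w \<notin> V2" using inter[of u] inter[of w] that by blast+
      then show ?thesis using nE1 nE2 by blast
    qed
    have "\<not> (sees_h (r u) (r w) \<and> sees_v (r u) (r w)) \<and>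
      ({u, w} \<in> E1 \<union> E2 \<longleftrightarrow> sees_h (r u) (r w) \<or> sees_v (r u) (r w))"
      using ex
    proof (elim disjE)
      assume h: "u \<in> V1 \<and> w \<in> V1" then show ?thesis
        using R1b[OF conjunct1[OF h] conjunct2[OF h] uw] H1h[OF conjunct1[OF h] conjunct2[OF h]] H1v[OF conjunct1[OF h] conjunct2[OF h]] ed1[OF conjunct1[OF h] conjunct2[OF h]] by argo
    next
      assume h: "u \<in> V2 \<and> w \<in> V2" then show ?thesis
        using R2b[OF conjunct1[OF h] conjunct2[OF h] uw] H2h[OF conjunct1[OF h] conjunct2[OF h]] H2v[OF conjunct1[OF h] conjunct2[OF h]] ed2[OF conjunct1[OF h] conjunct2[OF h]] by argo
    next
      assume h: "u \<in> V1 \<and> u \<noteq> v \<and> w \<in> V2 \<and> w \<noteq> v" then show ?thesis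
        using C[of u w] ed3 h by blast
    next
      assume h: "w \<in> V1 \<and> w \<noteq> v \<and> u \<in> V2 \<and> u \<noteq> v" then show ?thesis
        using C'[of w u] ed3 h by blast
    qed
    then show "\<not> (sees_h (r u) (r w) \<and> sees_v (r u) (r w))" by blast
  next
    fix u w assume u: "u \<in> V1 \<union> V2" and w: "w \<in> V1 \<union> V2" and uw: "u \<noteq> w"
    have ex: "(u \<in> V1 \<and> w \<in> V1) \<or> (u \<in> V2 \<and> w \<in> V2) \<or>
        (u \<in> V1 \<and> u \<noteq> v \<and> w \<in> V2 \<and> w \<noteq> v) \<or> (w \<in> V1 \<and> w \<noteq> v \<and> u \<in> V2 \<and> u \<noteq> v)"
      using u w int by blast
    have nE1: "{u, w} \<notin> E1" if "u \<notin> V1 \<or> w \<notin> V1" using E1sub[of u w] that uw by blast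
    have nE2: "{u, w} \<notin> E2" if "u \<notin> V2 \<or> w \<notin> V2" using E2sub[of u w] that uw by blast
    have ed1: "{u, w} \<in> E1 \<union> E2 \<longleftrightarrow> {u, w} \<in> E1" if "u \<in> V1" "w \<in> V1"
    proof -
      have "u \<notin> V2 \<or> w \<notin> V2" using inter[of u] inter[of w] that uw by blast
      then show ?thesis using nE2 by blast
    qed
    have ed2: "{u, w} \<in> E1 \<union> E2 \<longleftrightarrow> {u, w} \<in> E2" if "u \<in> V2" "w \<in> V2"
    proof -
      have "u \<notin> V1 \<or> w \<notin> V1" using inter[of u] inter[of w] that uw by blast
      then show ?thesis using nE1 by blast
    qed
    have ed3: "{u, w} \<notin> E1 \<union> E2" if "(u \<in> V1 \<and> u \<noteq> v \<and> w \<in> V2 \<and> w \<noteq> v) \<or> (w \<in> V1 \<and> w \<noteq> v \<and> u \<in> V2 \<and> u \<noteq> v)"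
    proof -
      have "u \<notin> V1 \<or> w \<notin> V1" "u \<notin> V2 \<or> w \<notin> V2" using inter[of u] inter[of w] that by blast+
      then show ?thesis using nE1 nE2 by blast
    qed
    have "\<not> (sees_h (r u) (r w) \<and> sees_v (r u) (r w)) \<and>
      ({u, w} \<in> E1 \<union> E2 \<longleftrightarrow> sees_h (r u) (r w) \<or> sees_v (r u) (r w))"
      using ex
    proof (elim disjE)
      assume h: "u \<in> V1 \<and> w \<in> V1" then show ?thesis
        using R1b[OF conjunct1[OF h] conjunct2[OF h] uw] H1h[OF conjunct1[OF h] conjunct2[OF h]] H1v[OF conjunct1[OF h] conjunct2[OF h]] ed1[OF conjunct1[OF h] conjunct2[OF h]] by argo
    next
      assume h: "u \<in> V2 \<and> w \<in> V2" then show ?thesis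
        using R2b[OF conjunct1[OF h] conjunct2[OF h] uw] H2h[OF conjunct1[OF h] conjunct2[OF h]] H2v[OF conjunct1[OF h] conjunct2[OF h]] ed2[OF conjunct1[OF h] conjunct2[OF h]] by argo
    next
      assume h: "u \<in> V1 \<and> u \<noteq> v \<and> w \<in> V2 \<and> w \<noteq> v" then show ?thesis
        using C[of u w] ed3 h by blast
    next
      assume h: "w \<in> V1 \<and> w \<noteq> v \<and> u \<in> V2 \<and> u \<noteq> v" then show ?thesis
        using C'[of w u] ed3 h by blast
    qed
    then show "{u, w} \<in> E1 \<union> E2 \<longleftrightarrow> sees_h (r u) (r w) \<or> sees_v (r u) (r w)" by blast
  qed
  moreover have "simple_graph (V1 \<union> V2) (E1 \<union> E2)"
    unfolding simple_graph_def
  proof (intro conjI ballI)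
    show "finite (V1 \<union> V2)" using sg1 sg2 unfolding simple_graph_def by simp
  next
    fix e assume "e \<in> E1 \<union> E2"
    then show "\<exists>u w. u \<noteq> w \<and> u \<in> V1 \<union> V2 \<and> w \<in> V1 \<union> V2 \<and> e = {u, w}"
    proof
      assume "e \<in> E1"
      then obtain u w where "u \<noteq> w" "u \<in> V1" "w \<in> V1" "e = {u, w}"
        using sg1 unfolding simple_graph_def by meson
      then show ?thesis by blast
    next
      assume "e \<in> E2"
      then obtain u w where "u \<noteq> w" "u \<in> V2" "w \<in> V2" "e = {u, w}"
        using sg2 unfolding simple_graph_def by meson
      then show ?thesis by blast
    qed
  qed
  ultimately show ?thesis unfolding TRVG_def by blast
qed

theorem lemma1:
  fixes V1 V2 :: "'a set" and E1 E2 :: "'a set set" and v :: 'a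
  assumes "TRVG V1 E1" and "TRVG V2 E2"
    and "V1 \<inter> V2 = {v}"
    and "\<exists>r1. trvg_rep V1 E1 r1 \<and>
           ((\<forall>w\<in>V1 - {v}. \<not> sees_h (r1 v) (r1 w)) \<or> (\<forall>w\<in>V1 - {v}. \<not> sees_v (r1 v) (r1 w)))"
    and "\<exists>r2. trvg_rep V2 E2 r2 \<and>
           ((\<forall>w\<in>V2 - {v}. \<not> sees_h (r2 v) (r2 w)) \<or> (\<forall>w\<in>V2 - {v}. \<not> sees_v (r2 v) (r2 w)))"
  shows "TRVG (V1 \<union> V2) (E1 \<union> E2)"
proof -
  have sg1: "simple_graph V1 E1" and sg2: "simple_graph V2 E2"
    using assms(1,2) unfolding TRVG_def by auto
  obtain r1 where r1: "trvg_rep V1 E1 r1" "\<forall>w\<in>V1 - {v}. \<not> sees_h (r1 v) (r1 w)"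
  proof -
    obtain q where q: "trvg_rep V1 E1 q"
      "(\<forall>w\<in>V1 - {v}. \<not> sees_h (q v) (q w)) \<or> (\<forall>w\<in>V1 - {v}. \<not> sees_v (q v) (q w))"
      using assms(4) by blast
    show ?thesis using q(2)
    proof
      assume "\<forall>w\<in>V1 - {v}. \<not> sees_h (q v) (q w)" then show ?thesis using that q(1) by blast
    next
      assume "\<forall>w\<in>V1 - {v}. \<not> sees_v (q v) (q w)"
      then show ?thesis using that[of "\<lambda>u. tr (q u)"] tr_rep[OF q(1)] tr_sees by simp
    qed
  qed
  obtain r2 where r2: "trvg_rep V2 E2 r2" "\<forall>w\<in>V2 - {v}. \<not> sees_v (r2 v) (r2 w)"
  proof -
    obtain q where q: "trvg_rep V2 E2 q"
      "(\<forall>w\<in>V2 - {v}. \<not> sees_h (q v) (q w)) \<or> (\<forall>w\<in>V2 - {v}. \<not> sees_v (q v) (q w))"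
      using assms(5) by blast
    show ?thesis using q(2)
    proof
      assume "\<forall>w\<in>V2 - {v}. \<not> sees_v (q v) (q w)" then show ?thesis using that q(1) by blast
    next
      assume "\<forall>w\<in>V2 - {v}. \<not> sees_h (q v) (q w)"
      then show ?thesis using that[of "\<lambda>u. tr (q u)"] tr_rep[OF q(1)] tr_sees by simp
    qed
  qed
  show ?thesis using core[OF sg1 sg2 assms(3) r1 r2] .
qed

end
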